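(* Let $\Gamma$ be a finite simplicial graph whose set $S$ of social vertices is non-empty, let $k=|S|$, $\Delta=\Gamma\setminus S$, and $n=|\Delta|$ (number of vertices). Let $\Phi_\Delta\le\mathrm{GL}(n,\mathbb{Z})$ be the image of $\mathrm{Aut}(A_\Delta)$ under the homomorphism induced by abelianising $A_\Delta$. Write matrices in $\mathrm{GL}(kn,\mathbb{Z})$ in $k\times k$ block form with $n\times n$ blocks, $M=(A_{ij})$. Let $Q\le\mathrm{GL}(kn,\mathbb{Z})$ be the subgroup $Q=G_1\times G_2$ where $G_1=\{(a_{ij}I_n)\mid (a_{ij})\in\mathrm{GL}(k,\mathbb{Z})\}$ and $G_2=\{\mathrm{Diag}(M,\dots,M)\mid M\in\Phi_\Delta\}$. Then the centraliser $C(Q)$ of $Q$ in $\mathrm{GL}(kn,\mathbb{Z})$ is a subgroup of $\{\mathrm{Diag}(M,\dots,M)\mid M\in\mathrm{GL}(n,\mathbb{Z})\}$.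
   Context: For a finite simplicial graph $\Gamma=(V,E)$, $A_\Gamma=\langle v\in V\mid [v,w]=1 \text{ for }(v,w)\in E\rangle$. A vertex is social if it is adjacent to every other vertex. $I_n$ is the $n\times n$ identity matrix, and $\mathrm{Diag}(D_1,\dots,D_k)$ denotes the block diagonal matrix with diagonal blocks $D_1,\dots,D_k$ and zero off-diagonal blocks. *)

theory Defs
  imports "Jordan_Normal_Form.Matrix" "HOL-Algebra.Group"
begin

text \<open>A finite simplicial graph: finite vertex set V, symmetric irreflexive
edge relation E (only its restriction to V matters).\<close>

definition simplicial_graph :: "'a set \<Rightarrow> ('a \<Rightarrow> 'a \<Rightarrow> bool) \<Rightarrow> bool" where
  "simplicial_graph V E \<longleftrightarrow> finite V \<and> (\<forall>x y. E x y \<longrightarrow> E y x) \<and> (\<forall>x. \<not> E x x)"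

definition social_vertices :: "'a set \<Rightarrow> ('a \<Rightarrow> 'a \<Rightarrow> bool) \<Rightarrow> 'a set" where
  "social_vertices V E = {v \<in> V. \<forall>w \<in> V. w \<noteq> v \<longrightarrow> E v w}"

text \<open>Words over generators and their inverses: (v, True) is v, (v, False) is v^-1.\<close>

type_synonym 'a letter = "'a \<times> bool"

inductive raag_step :: "('a \<Rightarrow> 'a \<Rightarrow> bool) \<Rightarrow> 'a letter list \<Rightarrow> 'a letter list \<Rightarrow> bool"
  for E where
  cancel: "raag_step E (u @ [(x, b), (x, \<not> b)] @ w) (u @ w)"
| commute: "E x y \<Longrightarrow> raag_step E (u @ [(x, b), (y, c)] @ w) (u @ [(y, c), (x, b)] @ w)"

definition raag_words :: "'a set \<Rightarrow> 'a letter list set" where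
  "raag_words V = {w. set w \<subseteq> V \<times> UNIV}"

definition raag_rel :: "'a set \<Rightarrow> ('a \<Rightarrow> 'a \<Rightarrow> bool) \<Rightarrow> ('a letter list \<times> 'a letter list) set" where
  "raag_rel V E = {(u, w). u \<in> raag_words V \<and> w \<in> raag_words V \<and>
      (\<lambda>a b. raag_step E a b \<or> raag_step E b a)\<^sup>*\<^sup>* u w}"

definition raag_class :: "'a set \<Rightarrow> ('a \<Rightarrow> 'a \<Rightarrow> bool) \<Rightarrow> 'a letter list \<Rightarrow> 'a letter list set" where
  "raag_class V E w = raag_rel V E `` {w}"

definition raag :: "'a set \<Rightarrow> ('a \<Rightarrow> 'a \<Rightarrow> bool) \<Rightarrow> 'a letter list set monoid" where
  "raag V E = \<lparr> carrier = raag_words V // raag_rel V E,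
      mult = (\<lambda>A B. \<Union>a\<in>A. \<Union>b\<in>B. raag_class V E (a @ b)),
      one = raag_class V E [] \<rparr>"

definition exp_sum :: "'a \<Rightarrow> 'a letter list \<Rightarrow> int" where
  "exp_sum v w = int (count_list w (v, True)) - int (count_list w (v, False))"

text \<open>Matrix of the automorphism of the abelianisation (= Z^n, basis the images of the
vertices e 0, ..., e (n-1)) induced by phi: column j is the image of generator e j.\<close>

definition ab_matrix :: "'a set \<Rightarrow> ('a \<Rightarrow> 'a \<Rightarrow> bool) \<Rightarrow> (nat \<Rightarrow> 'a) \<Rightarrow> nat
    \<Rightarrow> ('a letter list set \<Rightarrow> 'a letter list set) \<Rightarrow> int mat" where
  "ab_matrix V E e n \<phi> = mat n n (\<lambda>(i, j).
      exp_sum (e i) (SOME w. w \<in> \<phi> (raag_class V E [(e j, True)])))"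

definition Phi :: "'a set \<Rightarrow> ('a \<Rightarrow> 'a \<Rightarrow> bool) \<Rightarrow> (nat \<Rightarrow> 'a) \<Rightarrow> nat \<Rightarrow> int mat set" where
  "Phi V E e n = ab_matrix V E e n ` iso (raag V E) (raag V E)"

definition GL_int :: "nat \<Rightarrow> int mat set" where
  "GL_int m = {M \<in> carrier_mat m m. \<exists>N \<in> carrier_mat m m. M * N = 1\<^sub>m m \<and> N * M = 1\<^sub>m m}"

text \<open>(a_ij I_n) in k x k block form with n x n blocks.\<close>

definition scalar_blocks :: "nat \<Rightarrow> int mat \<Rightarrow> int mat" where
  "scalar_blocks n A = mat (dim_row A * n) (dim_col A * n)
      (\<lambda>(r, c). if r mod n = c mod n then A $$ (r div n, c div n) else 0)"

text \<open>Diag(M, ..., M) with k diagonal blocks.\<close>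

definition diag_blocks :: "nat \<Rightarrow> int mat \<Rightarrow> int mat" where
  "diag_blocks k M = mat (k * dim_row M) (k * dim_col M)
      (\<lambda>(r, c). if r div dim_row M = c div dim_col M
                then M $$ (r mod dim_row M, c mod dim_col M) else 0)"

definition centraliser :: "nat \<Rightarrow> int mat set \<Rightarrow> int mat set" where
  "centraliser m Q = {C \<in> GL_int m. \<forall>q \<in> Q. C * q = q * C}"

end

theory Submission
  imports Defs
begin

definition EA :: "nat \<Rightarrow> nat \<Rightarrow> nat \<Rightarrow> int \<Rightarrow> int mat" where
  "EA k p q s = mat k k (\<lambda>(i,j). (if i = j then 1 else 0) + (if i = p \<and> j = q then s else 0))"

lemma EA_mult:
  assumes "p < k" "q < k" "p \<noteq> q"
  shows "EA k p q s * EA k p q (-s) = 1\<^sub>m k"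
proof (rule eq_matI)
  fix i j assume ij: "i < dim_row (1\<^sub>m k)" "j < dim_col (1\<^sub>m k)"
  have "(EA k p q s * EA k p q (-s)) $$ (i,j) =
     (\<Sum>l\<in>{0..<k}. ((if i = l then 1 else 0) + (if i = p \<and> l = q then s else 0)) *
        ((if l = j then 1 else 0) + (if l = p \<and> j = q then -s else 0)))"
    using ij by (simp add: EA_def scalar_prod_def)
  also have "\<dots> = (\<Sum>l\<in>{0..<k}. (if l = i then (if l = j then 1 else 0) + (if l = p \<and> j = q then -s else 0) else 0)
        + (if l = q then (if i = p then s else 0) * ((if l = j then 1 else 0) + (if l = p \<and> j = q then -s else 0)) else 0))"
    by (rule sum.cong) (auto simp: algebra_simps)
  also have "\<dots> = (1\<^sub>m k) $$ (i,j)"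
    using ij assms by (simp add: sum.distrib)
  finally show "(EA k p q s * EA k p q (-s)) $$ (i,j) = (1\<^sub>m k) $$ (i,j)" .
qed (auto simp: EA_def)

lemma EA_GL:
  assumes "p < k" "q < k" "p \<noteq> q"
  shows "EA k p q 1 \<in> GL_int k"
  unfolding GL_int_def using EA_mult[OF assms, of 1] EA_mult[OF assms, of "-1"]
  by (auto intro!: bexI[of _ "EA k p q (-1)"] simp: EA_def)

lemma SB_entry:
  assumes "p < k" "q < k" "p \<noteq> q" "l < k*n" "c < k*n"
  shows "scalar_blocks n (EA k p q 1) $$ (l,c) =
     (if l = c then 1 else 0) + (if c div n = q \<and> l = p*n + c mod n then 1 else 0)"
proof -
  have n: "n > 0" using assms by (cases n) auto
  have ld: "l div n < k" "c div n < k" using assms by (auto simp: less_mult_imp_div_less)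
  have e1: "(l mod n = c mod n \<and> l div n = c div n) = (l = c)"
    by (metis div_mult_mod_eq)
  have e2: "(l mod n = c mod n \<and> l div n = p) = (l = p*n + c mod n)"
    using n by (auto simp: add.commute[of "p*n"] add.commute[of "q*n"]) (metis mod_div_mult_eq)
  show ?thesis using assms ld
    unfolding scalar_blocks_def EA_def using e1 e2
    by (auto simp: EA_def)
qed

lemma SB_dim: "scalar_blocks n (EA k p q s) \<in> carrier_mat (k*n) (k*n)"
  by (simp add: scalar_blocks_def EA_def)

lemma mult_SB_right:
  assumes C: "C \<in> carrier_mat (k*n) (k*n)" and "p < k" "q < k" "p \<noteq> q" "r < k*n" "c < k*n"
  shows "(C * scalar_blocks n (EA k p q 1)) $$ (r,c) =
     C $$ (r,c) + (if c div n = q then C $$ (r, p*n + c mod n) else 0)"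
proof -
  have n: "n > 0" using assms by (cases n) auto
  have pl: "p*n + c mod n < k*n"
  proof -
    have "p*n + c mod n < p*n + n" using n by simp
    also have "\<dots> = (p+1)*n" by simp
    also have "\<dots> \<le> k*n" using assms by (intro mult_right_mono) auto
    finally show ?thesis .
  qed
  have "(C * scalar_blocks n (EA k p q 1)) $$ (r,c) =
      (\<Sum>l\<in>{0..<k*n}. C $$ (r,l) * scalar_blocks n (EA k p q 1) $$ (l,c))"
    using assms SB_dim[of n k p q 1] by (simp add: scalar_prod_def)
  also have "\<dots> = (\<Sum>l\<in>{0..<k*n}. (if l = c then C $$ (r,l) else 0) +
        (if c div n = q then (if l = p*n + c mod n then C $$ (r,l) else 0) else 0))"
    by (rule sum.cong) (use assms in \<open>auto simp: SB_entry algebra_simps\<close>)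
  also have "\<dots> = C $$ (r,c) + (if c div n = q then C $$ (r, p*n + c mod n) else 0)"
    using assms pl by (simp add: sum.distrib)
  finally show ?thesis .
qed

lemma mult_SB_left:
  assumes C: "C \<in> carrier_mat (k*n) (k*n)" and "p < k" "q < k" "p \<noteq> q" "r < k*n" "c < k*n"
  shows "(scalar_blocks n (EA k p q 1) * C) $$ (r,c) =
     C $$ (r,c) + (if r div n = p then C $$ (q*n + r mod n, c) else 0)"
proof -
  have n: "n > 0" using assms by (cases n) auto
  have pl: "q*n + r mod n < k*n"
  proof -
    have "q*n + r mod n < q*n + n" using n by simp
    also have "\<dots> = (q+1)*n" by simp
    also have "\<dots> \<le> k*n" using assms by (intro mult_right_mono) auto
    finally show ?thesis .
  qed
  have "(scalar_blocks n (EA k p q 1) * C) $$ (r,c) =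
      (\<Sum>l\<in>{0..<k*n}. scalar_blocks n (EA k p q 1) $$ (r,l) * C $$ (l,c))"
    using assms SB_dim[of n k p q 1] by (simp add: scalar_prod_def)
  also have "\<dots> = (\<Sum>l\<in>{0..<k*n}. (if l = r then C $$ (l,c) else 0) +
        (if r div n = p then (if l = q*n + r mod n then C $$ (l,c) else 0) else 0))"
  proof (rule sum.cong)
    fix l assume l: "l \<in> {0..<k*n}"
    have n: "n > 0" using assms by (cases n) auto
    have e: "(l div n = q \<and> r = p*n + l mod n) = (r div n = p \<and> l = q*n + r mod n)"
      using n by (auto simp: add.commute[of "p*n"] add.commute[of "q*n"])
    show "scalar_blocks n (EA k p q 1) $$ (r,l) * C $$ (l,c) = (if l = r then C $$ (l,c) else 0) +
        (if r div n = p then (if l = q*n + r mod n then C $$ (l,c) else 0) else 0)"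
      using assms l e by (auto simp: SB_entry)
  qed simp
  also have "\<dots> = C $$ (r,c) + (if r div n = p then C $$ (q*n + r mod n, c) else 0)"
    using assms pl by (simp add: sum.distrib)
  finally show ?thesis .
qed

lemma commute_blocks:
  assumes C: "C \<in> carrier_mat (k*n) (k*n)"
    and comm: "\<And>p q. p < k \<Longrightarrow> q < k \<Longrightarrow> p \<noteq> q \<Longrightarrow>
        C * scalar_blocks n (EA k p q 1) = scalar_blocks n (EA k p q 1) * C"
  shows "C = diag_blocks k (mat n n (\<lambda>(i,j). C $$ (i,j)))"
proof (rule eq_matI)
  show "dim_row C = dim_row (diag_blocks k (mat n n (\<lambda>(i,j). C $$ (i,j))))"
    "dim_col C = dim_col (diag_blocks k (mat n n (\<lambda>(i,j). C $$ (i,j))))"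
    using C by (auto simp: diag_blocks_def)
  fix r c assume "r < dim_row (diag_blocks k (mat n n (\<lambda>(i,j). C $$ (i,j))))"
    "c < dim_col (diag_blocks k (mat n n (\<lambda>(i,j). C $$ (i,j))))"
  hence rc: "r < k*n" "c < k*n" by (auto simp: diag_blocks_def)
  have n: "n > 0" using rc by (cases n) auto
  have dk: "r div n < k" "c div n < k" using rc by (auto simp: less_mult_imp_div_less)
  have eq: "\<And>p q r c. p < k \<Longrightarrow> q < k \<Longrightarrow> p \<noteq> q \<Longrightarrow> r < k*n \<Longrightarrow> c < k*n \<Longrightarrow>
      (if c div n = q then C $$ (r, p*n + c mod n) else 0) = (if r div n = p then C $$ (q*n + r mod n, c) else 0)"
  proof -
    fix p q r c assume h: "p < k" "q < k" "p \<noteq> q" "r < k*n" "c < k*n"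
    have "(C * scalar_blocks n (EA k p q 1)) $$ (r,c) = (scalar_blocks n (EA k p q 1) * C) $$ (r,c)"
      using comm[OF h(1-3)] by simp
    thus "(if c div n = q then C $$ (r, p*n + c mod n) else 0) = (if r div n = p then C $$ (q*n + r mod n, c) else 0)"
      using mult_SB_right[OF C h] mult_SB_left[OF C h] by simp
  qed
  have rhs: "diag_blocks k (mat n n (\<lambda>(i,j). C $$ (i,j))) $$ (r,c) =
      (if r div n = c div n then C $$ (r mod n, c mod n) else 0)"
    using rc n by (simp add: diag_blocks_def)
  show "C $$ (r,c) = diag_blocks k (mat n n (\<lambda>(i,j). C $$ (i,j))) $$ (r,c)"
  proof (cases "r div n = c div n")
    case True
    show ?thesis
    proof (cases "c div n = 0")
      case True
      thus ?thesis using \<open>r div n = c div n\<close> rhs n by (simp add: div_eq_0_iff)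
    next
      case False
      have rm: "r mod n < k*n" using n rc using mod_le_divisor[OF n, of r] dk(1) by (metis le_less_trans mod_less_eq_dividend)
      have "C $$ (r mod n, c mod n) = C $$ ((c div n)*n + r mod n, c)"
        using eq[of 0 "c div n" "r mod n" c] False dk rm rc n by simp
      also have "(c div n)*n + r mod n = r" using \<open>r div n = c div n\<close>
        by (metis div_mult_mod_eq)
      finally show ?thesis using rhs True by simp
    qed
  next
    case False
    define q where "q = (if c div n = 0 then 1 else 0::nat)"
    have qk: "q < k" "q \<noteq> c div n" using dk False unfolding q_def by auto
    have c0: "q*n + c mod n < k*n"
    proof -
      have "q*n + c mod n < q*n + n" using n by simp
      also have "\<dots> = (q+1)*n" by simp
      also have "\<dots> \<le> k*n" using qk by (intro mult_right_mono) auto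
      finally show ?thesis .
    qed
    have "C $$ (r, (c div n)*n + (q*n + c mod n) mod n) = 0"
      using eq[of "c div n" q r "q*n + c mod n"] False dk qk rc c0 n by simp
    moreover have "(c div n)*n + (q*n + c mod n) mod n = c" by simp
    ultimately show ?thesis using rhs False by simp
  qed
qed

lemma step_exp: "raag_step E a b \<Longrightarrow> exp_sum v a = exp_sum v b"
  by (induction rule: raag_step.induct) (auto simp: exp_sum_def)

lemma rtc_exp: "(\<lambda>a b. raag_step E a b \<or> raag_step E b a)\<^sup>*\<^sup>* a b \<Longrightarrow> exp_sum v a = exp_sum v b"
  by (induction rule: rtranclp_induct) (auto dest: step_exp[where v=v])

lemma ab_matrix_id:
  assumes "inj_on e {..<n}" "e ` {..<n} \<subseteq> V"
  shows "ab_matrix V E e n (\<lambda>x. x) = 1\<^sub>m n"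
proof (rule eq_matI)
  fix i j assume ij: "i < dim_row (1\<^sub>m n)" "j < dim_col (1\<^sub>m n)"
  have w0: "[(e j, True)] \<in> raag_class V E [(e j, True)]"
    using ij assms by (auto simp: raag_class_def raag_rel_def raag_words_def)
  define w where "w = (SOME w. w \<in> raag_class V E [(e j, True)])"
  have "w \<in> raag_class V E [(e j, True)]" unfolding w_def using w0 by (rule someI)
  hence "exp_sum (e i) w = exp_sum (e i) [(e j, True)]"
    by (auto simp: raag_class_def raag_rel_def dest: rtc_exp[where v="e i"])
  also have "\<dots> = (if i = j then 1 else 0)"
    using ij assms(1) by (auto simp: exp_sum_def inj_on_def)
  finally show "ab_matrix V E e n (\<lambda>x. x) $$ (i, j) = 1\<^sub>m n $$ (i, j)"
    using ij by (simp add: ab_matrix_def w_def)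
qed (auto simp: ab_matrix_def)

lemma one_in_Phi:
  assumes "inj_on e {..<n}" "e ` {..<n} \<subseteq> V"
  shows "1\<^sub>m n \<in> Phi V E e n"
  unfolding Phi_def using ab_matrix_id[OF assms, of E] iso_set_refl
  by (metis image_eqI)

lemma diag_one: "diag_blocks k (1\<^sub>m n) = 1\<^sub>m (k*n)"
proof (rule eq_matI)
  fix r c assume "r < dim_row (1\<^sub>m (k*n))" "c < dim_col (1\<^sub>m (k*n))"
  hence rc: "r < k*n" "c < k*n" by auto
  have n: "n > 0" using rc by (cases n) auto
  have "(r div n = c div n \<and> r mod n = c mod n) = (r = c)" by (metis div_mult_mod_eq)
  thus "diag_blocks k (1\<^sub>m n) $$ (r,c) = 1\<^sub>m (k*n) $$ (r,c)"
    using rc n by (auto simp: diag_blocks_def)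
qed (auto simp: diag_blocks_def)

lemma block_zero:
  assumes "C = diag_blocks k (mat n n (\<lambda>(i,j). C $$ (i,j)))" "i < n" "n \<le> l" "l < k*n"
  shows "C $$ (i,l) = 0" "C $$ (l,i) = 0"
proof -
  have "i < k*n" using assms by simp
  have "i div n = 0" "l div n \<noteq> 0" using assms by (auto simp: div_greater_zero_iff)
  have il: "i < k*n" "l < k*n" "n \<le> l" "i < n" using assms by auto
  have "diag_blocks k (mat n n (\<lambda>(i,j). C $$ (i,j))) $$ (i,l) = 0"
       "diag_blocks k (mat n n (\<lambda>(i,j). C $$ (i,j))) $$ (l,i) = 0"
    using il \<open>i div n = 0\<close> \<open>l div n \<noteq> 0\<close> by (simp_all add: diag_blocks_def)
  then show "C $$ (i,l) = 0" "C $$ (l,i) = 0" using assms(1) by metis+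
qed

lemma block_inv:
  assumes C: "C \<in> carrier_mat (k*n) (k*n)" and D: "D \<in> carrier_mat (k*n) (k*n)"
    and CD: "C * D = 1\<^sub>m (k*n)" and DC: "D * C = 1\<^sub>m (k*n)"
    and hC: "C = diag_blocks k (mat n n (\<lambda>(i,j). C $$ (i,j)))" and k: "k \<ge> 1"
  shows "mat n n (\<lambda>(i,j). C $$ (i,j)) \<in> GL_int n"
proof -
  have nk: "n \<le> k*n" using k by simp
  let ?M = "mat n n (\<lambda>(i,j). C $$ (i,j))" and ?N = "mat n n (\<lambda>(i,j). D $$ (i,j))"
  have 1: "?M * ?N = 1\<^sub>m n"
  proof (rule eq_matI)
    fix i j assume "i < dim_row (1\<^sub>m n)" "j < dim_col (1\<^sub>m n)"
    hence ij: "i < n" "j < n" by auto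
    have ikn: "i < k*n" "j < k*n" using ij nk by linarith+
    have "(?M * ?N) $$ (i,j) = (\<Sum>l\<in>{0..<n}. C $$ (i,l) * D $$ (l,j))"
      using ij by (simp add: scalar_prod_def)
    also have "\<dots> = (\<Sum>l\<in>{0..<k*n}. C $$ (i,l) * D $$ (l,j))"
      by (rule sum.mono_neutral_left) (use nk block_zero[OF hC ij(1)] in auto)
    also have "\<dots> = (\<Sum>l\<in>{0..<k*n}. row C i $ l * col D j $ l)"
      by (rule sum.cong) (use C D ikn in auto)
    also have "\<dots> = row C i \<bullet> col D j" proof -
      have dD: "dim_row D = k*n" using D by auto
      show ?thesis unfolding scalar_prod_def dim_col dD by (rule refl)
    qed
    also have "\<dots> = (C * D) $$ (i,j)" by (rule index_mult_mat(1)[symmetric]) (use C D ikn in auto)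
    finally show "(?M * ?N) $$ (i,j) = 1\<^sub>m n $$ (i,j)" using CD ij ikn by simp
  qed auto
  have 2: "?N * ?M = 1\<^sub>m n"
  proof (rule eq_matI)
    fix i j assume "i < dim_row (1\<^sub>m n)" "j < dim_col (1\<^sub>m n)"
    hence ij: "i < n" "j < n" by auto
    have ikn: "i < k*n" "j < k*n" using ij nk by linarith+
    have "(?N * ?M) $$ (i,j) = (\<Sum>l\<in>{0..<n}. D $$ (i,l) * C $$ (l,j))"
      using ij by (simp add: scalar_prod_def)
    also have "\<dots> = (\<Sum>l\<in>{0..<k*n}. D $$ (i,l) * C $$ (l,j))"
      by (rule sum.mono_neutral_left) (use nk block_zero[OF hC ij(2)] in auto)
    also have "\<dots> = (\<Sum>l\<in>{0..<k*n}. row D i $ l * col C j $ l)"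
      by (rule sum.cong) (use C D ikn in auto)
    also have "\<dots> = row D i \<bullet> col C j" proof -
      have dD: "dim_row C = k*n" using C by auto
      show ?thesis unfolding scalar_prod_def dim_col dD by (rule refl)
    qed
    also have "\<dots> = (D * C) $$ (i,j)" by (rule index_mult_mat(1)[symmetric]) (use C D ikn in auto)
    finally show "(?N * ?M) $$ (i,j) = 1\<^sub>m n $$ (i,j)" using DC ij ikn by simp
  qed auto
  show ?thesis unfolding GL_int_def using 1 2 by (auto intro!: bexI[of _ ?N])
qed

theorem mainTheorem5:
  fixes V :: "'a set" and E :: "'a \<Rightarrow> 'a \<Rightarrow> bool" and e :: "nat \<Rightarrow> 'a"
  assumes "simplicial_graph V E"
    and "social_vertices V E \<noteq> {}"
    and "k = card (social_vertices V E)"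
    and "n = card (V - social_vertices V E)"
    and "bij_betw e {..<n} (V - social_vertices V E)"
    and "G1 = {scalar_blocks n A | A. A \<in> GL_int k}"
    and "G2 = {diag_blocks k M | M. M \<in> Phi (V - social_vertices V E) E e n}"
    and "Q = {g1 * g2 | g1 g2. g1 \<in> G1 \<and> g2 \<in> G2}"
  shows "centraliser (k * n) Q \<subseteq> {diag_blocks k M | M. M \<in> GL_int n}"
proof
  fix C assume "C \<in> centraliser (k * n) Q"
  hence CG: "C \<in> GL_int (k*n)" and cq: "\<And>q. q \<in> Q \<Longrightarrow> C * q = q * C"
    unfolding centraliser_def by auto
  from CG obtain D where C: "C \<in> carrier_mat (k*n) (k*n)" and D: "D \<in> carrier_mat (k*n) (k*n)"
    and CD: "C * D = 1\<^sub>m (k*n)" and DC: "D * C = 1\<^sub>m (k*n)" unfolding GL_int_def by auto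
  have fin: "finite (social_vertices V E)"
    using assms(1) unfolding simplicial_graph_def social_vertices_def by auto
  have k: "k \<ge> 1" using assms(2,3) fin by (simp add: Suc_le_eq card_gt_0_iff)
  have one2: "1\<^sub>m (k*n) \<in> G2"
    using one_in_Phi[of e n "V - social_vertices V E" E] assms(5,7) diag_one[of k n]
    unfolding bij_betw_def by auto
  have inQ: "scalar_blocks n (EA k p q 1) \<in> Q" if "p < k" "q < k" "p \<noteq> q" for p q
  proof -
    have "scalar_blocks n (EA k p q 1) \<in> G1" using assms(6) EA_GL[OF that] by auto
    moreover have "scalar_blocks n (EA k p q 1) = scalar_blocks n (EA k p q 1) * 1\<^sub>m (k*n)"
      using SB_dim[of n k p q 1] by simp
    ultimately show ?thesis using one2 assms(8) by blast
  qed
  have hC: "C = diag_blocks k (mat n n (\<lambda>(i,j). C $$ (i,j)))"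
    by (rule commute_blocks[OF C]) (rule cq[OF inQ], auto)
  show "C \<in> {diag_blocks k M | M. M \<in> GL_int n}"
    using hC block_inv[OF C D CD DC hC k] by blast
qed

end
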